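(* For all graphs $G_1,G_2$ (for which the sums below are defined): (i) $f_\infty(G_1+_vG_2)=\max\{f_\infty(G_1),f_\infty(G_2)\}$; (ii) $f_\infty(G_1+_{vw}G_2)\le f_\infty(G_1\oplus_{vw}G_2)\le f_\infty(G_1)+f_\infty(G_2)-1$; (iii) if $G$ is a $k$-sum of $G_1$ and $G_2$ (for any $k$), then $f_\infty(G)\le f_\infty(G_1)+f_\infty(G_2)$.
   Context: A distance function on a graph $G$ is $d:E(G)\to\mathbb{R}_{\ge0}$ with $d(vw)\le\sum_i d(v_{i-1}v_i)$ for every edge $vw$ and every $v$–$w$ path. $f_\infty(G)$ is the least $k$ such that for every distance function $d$ on $G$ there is $\phi:V(G)\to\mathbb{R}^k$ with $\|\phi(v)-\phi(w)\|_\infty=d(vw)$ for all edges $vw$. A $k$-sum of $G_1$ and $G_2$ is a graph obtained by gluing $G_1$ and $G_2$ along a common clique of size $k$ (identifying the clique vertices, $G_1$ and $G_2$ otherwise disjoint) and then possibly deleting some edges of that clique. $G_1+_vG_2$ denotes $G_1\cup G_2$ where $V(G_1)\cap V(G_2)=\{v\}$. $G_1\oplus_{vw}G_2$ denotes $G_1\cup G_2$ where $V(G_1)\cap V(G_2)=\{v,w\}$ and $vw\in E(G_1)\cap E(G_2)$; $G_1+_{vw}G_2$ is $G_1\oplus_{vw}G_2$ with the edge $vw$ deleted. *)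

theory Defs
  imports Complex_Main
begin

type_synonym 'a graph = "'a set \<times> 'a set set"

definition verts :: "'a graph \<Rightarrow> 'a set" where "verts G = fst G"
definition edges :: "'a graph \<Rightarrow> 'a set set" where "edges G = snd G"

definition graph :: "'a graph \<Rightarrow> bool" where
  "graph G \<longleftrightarrow> finite (verts G) \<and>
     (\<forall>e\<in>edges G. \<exists>u v. e = {u, v} \<and> u \<noteq> v \<and> u \<in> verts G \<and> v \<in> verts G)"

definition is_path :: "'a graph \<Rightarrow> 'a list \<Rightarrow> 'a \<Rightarrow> 'a \<Rightarrow> bool" where
  "is_path G xs v w \<longleftrightarrow> xs \<noteq> [] \<and> hd xs = v \<and> last xs = w \<and> distinct xs \<and>
     set xs \<subseteq> verts G \<and> (\<forall>i < length xs - 1. {xs ! i, xs ! Suc i} \<in> edges G)"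

definition path_length :: "('a set \<Rightarrow> real) \<Rightarrow> 'a list \<Rightarrow> real" where
  "path_length d xs = (\<Sum>i < length xs - 1. d {xs ! i, xs ! Suc i})"

text \<open>Distance function on G (only its values on edges matter).\<close>
definition distance_function :: "'a graph \<Rightarrow> ('a set \<Rightarrow> real) \<Rightarrow> bool" where
  "distance_function G d \<longleftrightarrow> (\<forall>e\<in>edges G. 0 \<le> d e) \<and>
     (\<forall>v w xs. {v, w} \<in> edges G \<longrightarrow> is_path G xs v w \<longrightarrow> d {v, w} \<le> path_length d xs)"

text \<open>The sup-norm distance in R^k, points of R^k represented as nat => real
  (only coordinates 0..k-1 are used); for k = 0 it is 0.\<close>
definition linf_dist :: "nat \<Rightarrow> (nat \<Rightarrow> real) \<Rightarrow> (nat \<Rightarrow> real) \<Rightarrow> real" where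
  "linf_dist k x y = Max (insert 0 ((\<lambda>i. \<bar>x i - y i\<bar>) ` {..<k}))"

definition f_inf :: "'a graph \<Rightarrow> nat" where
  "f_inf G = (LEAST k. \<forall>d. distance_function G d \<longrightarrow>
      (\<exists>\<phi> :: 'a \<Rightarrow> nat \<Rightarrow> real. \<forall>v w. {v, w} \<in> edges G \<longrightarrow> linf_dist k (\<phi> v) (\<phi> w) = d {v, w}))"

definition graph_union :: "'a graph \<Rightarrow> 'a graph \<Rightarrow> 'a graph" where
  "graph_union G1 G2 = (verts G1 \<union> verts G2, edges G1 \<union> edges G2)"

definition delete_edge :: "'a graph \<Rightarrow> 'a set \<Rightarrow> 'a graph" where
  "delete_edge G e = (verts G, edges G - {e})"

definition is_clique :: "'a graph \<Rightarrow> 'a set \<Rightarrow> bool" where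
  "is_clique G C \<longleftrightarrow> C \<subseteq> verts G \<and> (\<forall>x\<in>C. \<forall>y\<in>C. x \<noteq> y \<longrightarrow> {x, y} \<in> edges G)"

definition is_k_sum :: "nat \<Rightarrow> 'a graph \<Rightarrow> 'a graph \<Rightarrow> 'a graph \<Rightarrow> bool" where
  "is_k_sum k G G1 G2 \<longleftrightarrow> (let C = verts G1 \<inter> verts G2 in
     card C = k \<and> is_clique G1 C \<and> is_clique G2 C \<and>
     (\<exists>F. F \<subseteq> {{x, y} | x y. x \<in> C \<and> y \<in> C \<and> x \<noteq> y} \<and>
          G = (verts G1 \<union> verts G2, (edges G1 \<union> edges G2) - F)))"

end

theory Submission
  imports Defs
begin


fun walk :: "'a set set \<Rightarrow> 'a list \<Rightarrow> bool" where
  "walk E (x#y#zs) = ({x,y} \<in> E \<and> walk E (y#zs))"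
| "walk E _ = True"

fun wl :: "('a set \<Rightarrow> real) \<Rightarrow> 'a list \<Rightarrow> real" where
  "wl d (x#y#zs) = d {x,y} + wl d (y#zs)"
| "wl d _ = 0"

lemma walk_idx: "walk E xs \<longleftrightarrow> (\<forall>i < length xs - 1. {xs ! i, xs ! Suc i} \<in> E)"
proof (induction xs rule: walk.induct)
  case (1 E x y zs)
  then show ?case by (auto simp: less_Suc_eq_0_disj)
qed auto

lemma wl_idx: "path_length d xs = wl d xs"
proof (induction d xs rule: wl.induct)
  case (1 d x y zs)
  have "path_length d (x#y#zs) = (\<Sum>i<Suc (length zs). d {(x#y#zs) ! i, (x#y#zs) ! Suc i})"
    by (simp add: path_length_def)
  also have "\<dots> = d {x,y} + (\<Sum>i<length zs. d {(y#zs) ! i, (y#zs) ! Suc i})"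
    by (subst sum.lessThan_Suc_shift) simp
  also have "\<dots> = d {x,y} + path_length d (y#zs)" by (simp add: path_length_def)
  finally show ?case using 1 by simp
qed (auto simp: path_length_def)

lemma walk_app: "walk E (xs @ y # ys) \<longleftrightarrow> walk E (xs @ [y]) \<and> walk E (y # ys)"
  by (induction xs rule: walk.induct) auto

lemma wl_app: "wl d (xs @ y # ys) = wl d (xs @ [y]) + wl d (y # ys)"
  by (induction xs rule: induct_list012) auto

lemma walk_join: "p \<noteq> [] \<Longrightarrow> walk E p \<Longrightarrow> walk E q \<Longrightarrow> q \<noteq> [] \<Longrightarrow> last p = hd q \<Longrightarrow>
   walk E (butlast p @ q)"
  by (metis append_butlast_last_id list.collapse walk_app)

lemma wl_join: "p \<noteq> [] \<Longrightarrow> q \<noteq> [] \<Longrightarrow> last p = hd q \<Longrightarrow>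
   wl d (butlast p @ q) = wl d p + wl d q"
  by (metis append_butlast_last_id list.collapse wl_app)

lemma wl_nonneg: "walk E xs \<Longrightarrow> \<forall>e\<in>E. 0 \<le> d e \<Longrightarrow> 0 \<le> wl d xs"
  by (induction xs rule: walk.induct) auto

lemma walk_mono: "walk E xs \<Longrightarrow> E \<subseteq> E' \<Longrightarrow> walk E' xs"
  by (induction xs rule: walk.induct) auto

lemma walk_rev: "walk E (rev xs) = walk E xs"
proof (induction xs rule: walk.induct)
  case (1 E x y zs)
  have "walk E (rev (x#y#zs)) = walk E (rev zs @ y # [x])" by simp
  also have "\<dots> = (walk E (rev zs @ [y]) \<and> walk E [y,x])" by (rule walk_app)
  also have "\<dots> = walk E (x#y#zs)" using 1 by (auto simp: insert_commute)
  finally show ?case .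
qed auto

lemma wl_rev: "wl d (rev xs) = wl d xs"
proof (induction d xs rule: wl.induct)
  case (1 d x y zs)
  have "wl d (rev (x#y#zs)) = wl d (rev zs @ y # [x])" by simp
  also have "\<dots> = wl d (rev zs @ [y]) + wl d [y,x]" by (rule wl_app)
  also have "\<dots> = wl d (x#y#zs)" using 1 by (simp add: insert_commute)
  finally show ?case .
qed auto

lemma walk_set: "walk E xs \<Longrightarrow> xs \<noteq> [] \<Longrightarrow> set xs \<subseteq> insert (hd xs) (\<Union>E)"
  by (induction xs rule: walk.induct) auto

lemma walk_set1: "walk E xs \<Longrightarrow> Suc 0 < length xs \<Longrightarrow> set xs \<subseteq> \<Union>E"
proof (induction xs rule: walk.induct)
  case (1 E x y zs)
  then show ?case by (cases zs) auto
qed auto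

lemma walk_set2: "walk E xs \<Longrightarrow> xs \<noteq> [] \<Longrightarrow> hd xs \<noteq> last xs \<Longrightarrow> set xs \<subseteq> \<Union>E"
proof -
  assume a: "walk E xs" "xs \<noteq> []" "hd xs \<noteq> last xs"
  have "Suc 0 < length xs" using a(2,3) by (cases xs; cases "tl xs"; auto)
  then show ?thesis using walk_set1 a(1) by blast
qed

lemma shorten:
  assumes "walk E xs" "xs \<noteq> []" "\<forall>e\<in>E. 0 \<le> d e"
  shows "\<exists>ys. ys \<noteq> [] \<and> hd ys = hd xs \<and> last ys = last xs \<and> distinct ys \<and> set ys \<subseteq> set xs
     \<and> walk E ys \<and> wl d ys \<le> wl d xs"
  using assms(1,2)
proof (induction "length xs" arbitrary: xs rule: less_induct)
  case less
  show ?case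
  proof (cases "distinct xs")
    case True then show ?thesis using less.prems by blast
  next
    case False
    then obtain as z bs cs where xs: "xs = as @ [z] @ bs @ [z] @ cs"
      using not_distinct_decomp by blast
    let ?xs = "as @ z # cs"
    have xs': "xs = as @ z # (bs @ z # cs)" unfolding xs by simp
    have e1: "walk E (as @ [z]) \<and> walk E (z # bs @ z # cs)"
      using less.prems(1) walk_app[of E as z "bs @ z # cs"] xs' by simp
    have e2: "walk E (z # bs @ [z]) \<and> walk E (z # cs)"
      using e1 walk_app[of E "z # bs" z cs] by simp
    have w1: "walk E (as @ [z])" "walk E (z # bs @ [z])" "walk E (z # cs)" using e1 e2 by auto
    have w: "walk E ?xs" using w1 walk_app[of E as z cs] by simp
    have "wl d xs = wl d (as @ [z]) + wl d (z # bs @ z # cs)"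
      using wl_app[of d as z "bs @ z # cs"] xs' by simp
    also have "wl d (z # bs @ z # cs) = wl d (z # bs @ [z]) + wl d (z # cs)"
      using wl_app[of d "z # bs" z cs] by simp
    finally have wx: "wl d xs = wl d (as @ [z]) + wl d (z # bs @ [z]) + wl d (z # cs)" by simp
    moreover have "0 \<le> wl d (z # bs @ [z])" using wl_nonneg w1(2) assms(3) by blast
    ultimately have le: "wl d ?xs \<le> wl d xs" by (simp add: wl_app[of d as z cs])
    have "length ?xs < length xs" unfolding xs by simp
    then obtain ys where ys: "ys \<noteq> [] \<and> hd ys = hd ?xs \<and> last ys = last ?xs \<and> distinct ys \<and> set ys \<subseteq> set ?xs
     \<and> walk E ys \<and> wl d ys \<le> wl d ?xs" using less.hyps w by blast
    have "hd ?xs = hd xs" "last ?xs = last xs" unfolding xs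
      by (cases as; simp) (cases cs; simp)
    moreover have "set ?xs \<subseteq> set xs" unfolding xs by auto
    ultimately show ?thesis using ys le by (metis order.trans)
  qed
qed



definition rch :: "'a set set \<Rightarrow> 'a \<Rightarrow> 'a \<Rightarrow> bool" where
  "rch E x y = (\<exists>xs. xs \<noteq> [] \<and> hd xs = x \<and> last xs = y \<and> walk E xs)"
definition pths :: "'a set set \<Rightarrow> 'a \<Rightarrow> 'a \<Rightarrow> 'a list set" where
  "pths E x y = {xs. xs \<noteq> [] \<and> hd xs = x \<and> last xs = y \<and> distinct xs \<and> walk E xs}"
definition dl :: "'a set set \<Rightarrow> ('a set \<Rightarrow> real) \<Rightarrow> 'a \<Rightarrow> 'a \<Rightarrow> real" where
  "dl E d x y = Min (wl d ` pths E x y)"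
definition fin :: "'a set set \<Rightarrow> bool" where
  "fin E = (finite E \<and> (\<forall>e\<in>E. \<exists>u v. e = {u,v} \<and> u \<noteq> v))"
definition dfE :: "'a set set \<Rightarrow> ('a set \<Rightarrow> real) \<Rightarrow> bool" where
  "dfE E d = ((\<forall>e\<in>E. 0 \<le> d e) \<and> (\<forall>v w xs. {v,w} \<in> E \<longrightarrow> xs \<noteq> [] \<longrightarrow> hd xs = v \<longrightarrow> last xs = w
      \<longrightarrow> walk E xs \<longrightarrow> d {v,w} \<le> wl d xs))"

lemma fin_U: "fin E \<Longrightarrow> finite (\<Union>E)"
  unfolding fin_def by (metis finite.emptyI finite.insertI finite_Union)

lemma fin_ne: "fin E \<Longrightarrow> {x,y} \<in> E \<Longrightarrow> x \<noteq> y"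
  unfolding fin_def by (metis doubleton_eq_iff insert_absorb2)

lemma pths_finite: "fin E \<Longrightarrow> finite (pths E x y)"
proof -
  assume "fin E"
  have "pths E x y \<subseteq> {xs. set xs \<subseteq> insert x (\<Union>E) \<and> distinct xs}"
    unfolding pths_def using walk_set by fastforce
  moreover have "finite {xs. set xs \<subseteq> insert x (\<Union>E) \<and> distinct xs}"
    by (rule finite_subset_distinct) (use fin_U[OF \<open>fin E\<close>] in auto)
  ultimately show ?thesis by (rule finite_subset)
qed

lemma rch_refl: "rch E x x" unfolding rch_def by (rule exI[of _ "[x]"]) auto

lemma rch_edge: "{x,y} \<in> E \<Longrightarrow> rch E x y" unfolding rch_def by (rule exI[of _ "[x,y]"]) auto

lemma hd_join: "p \<noteq> [] \<Longrightarrow> last p = hd q \<Longrightarrow> hd (butlast p @ q) = hd p"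
  by (induction p) auto

lemma rch_trans: "rch E x y \<Longrightarrow> rch E y z \<Longrightarrow> rch E x z"
  unfolding rch_def
proof (elim exE conjE)
  fix p q assume p: "p \<noteq> []" "hd p = x" "last p = y" "walk E p"
    and q: "q \<noteq> []" "hd q = y" "last q = z" "walk E q"
  have "butlast p @ q \<noteq> [] \<and> hd (butlast p @ q) = x \<and> last (butlast p @ q) = z \<and> walk E (butlast p @ q)"
    using p q walk_join[of p E q] hd_join[of p q] by simp
  then show "\<exists>xs. xs \<noteq> [] \<and> hd xs = x \<and> last xs = z \<and> walk E xs" by blast
qed

lemma rch_sym: "rch E x y \<Longrightarrow> rch E y x"
  unfolding rch_def
proof (elim exE conjE)
  fix p assume p: "p \<noteq> []" "hd p = x" "last p = y" "walk E p"
  have "rev p \<noteq> [] \<and> hd (rev p) = y \<and> last (rev p) = x \<and> walk E (rev p)"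
    using p by (simp add: hd_rev last_rev walk_rev)
  then show "\<exists>xs. xs \<noteq> [] \<and> hd xs = y \<and> last xs = x \<and> walk E xs" by blast
qed

lemma pths_rev: "pths E y x = rev ` pths E x y"
proof
  show "rev ` pths E x y \<subseteq> pths E y x"
    unfolding pths_def by (auto simp: hd_rev last_rev walk_rev)
  show "pths E y x \<subseteq> rev ` pths E x y"
  proof
    fix p assume p: "p \<in> pths E y x"
    have "rev p \<in> pths E x y" using p unfolding pths_def by (auto simp: hd_rev last_rev walk_rev)
    then show "p \<in> rev ` pths E x y" by (metis image_eqI rev_rev_ident)
  qed
qed

lemma dl_sym: "dl E d x y = dl E d y x"
proof -
  have "wl d ` pths E y x = wl d ` pths E x y"
    using pths_rev[of E y x] by (simp add: image_image wl_rev)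
  then show ?thesis unfolding dl_def by simp
qed

lemma dl_le:
  assumes "fin E" "\<forall>e\<in>E. 0 \<le> d e" "walk E xs" "xs \<noteq> []" "hd xs = x" "last xs = y"
  shows "dl E d x y \<le> wl d xs"
proof -
  obtain ys where ys: "ys \<noteq> [] \<and> hd ys = hd xs \<and> last ys = last xs \<and> distinct ys \<and> set ys \<subseteq> set xs
     \<and> walk E ys \<and> wl d ys \<le> wl d xs" using shorten assms by blast
  then have "ys \<in> pths E x y" unfolding pths_def using assms by auto
  then have "dl E d x y \<le> wl d ys" unfolding dl_def
    using pths_finite[OF assms(1)] by simp
  then show ?thesis using ys by linarith
qed

lemma dl_attain:
  assumes "fin E" "\<forall>e\<in>E. 0 \<le> d e" "rch E x y"
  shows "\<exists>p\<in>pths E x y. wl d p = dl E d x y"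
proof -
  obtain xs where xs: "xs \<noteq> []" "hd xs = x" "last xs = y" "walk E xs" using assms(3) rch_def by metis
  obtain ys where ys: "ys \<noteq> [] \<and> hd ys = hd xs \<and> last ys = last xs \<and> distinct ys \<and> set ys \<subseteq> set xs
     \<and> walk E ys \<and> wl d ys \<le> wl d xs" using shorten assms xs by blast
  then have "ys \<in> pths E x y" unfolding pths_def using xs by auto
  then have "wl d ` pths E x y \<noteq> {}" by auto
  then have "dl E d x y \<in> wl d ` pths E x y" unfolding dl_def
    using pths_finite[OF assms(1)] by (intro Min_in) auto
  then show ?thesis by auto
qed

lemma dl_nonneg: "fin E \<Longrightarrow> \<forall>e\<in>E. 0 \<le> d e \<Longrightarrow> rch E x y \<Longrightarrow> 0 \<le> dl E d x y"
  using dl_attain wl_nonneg unfolding pths_def by fastforce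

lemma dl_refl: "fin E \<Longrightarrow> \<forall>e\<in>E. 0 \<le> d e \<Longrightarrow> dl E d x x = 0"
  using dl_le[of E d "[x]" x x] dl_nonneg[of E d x x] rch_refl by fastforce

lemma dl_tri:
  assumes "fin E" "\<forall>e\<in>E. 0 \<le> d e" "rch E x y" "rch E y z"
  shows "dl E d x z \<le> dl E d x y + dl E d y z"
proof -
  obtain p where p: "p \<in> pths E x y" "wl d p = dl E d x y" using dl_attain assms by metis
  obtain q where q: "q \<in> pths E y z" "wl d q = dl E d y z" using dl_attain assms by metis
  have pq: "p \<noteq> []" "q \<noteq> []" "last p = hd q" "walk E p" "walk E q" "hd p = x" "last q = z"
    using p q unfolding pths_def by auto
  have "hd (butlast p @ q) = x" using pq hd_join[of p q] by simp
  then have "dl E d x z \<le> wl d (butlast p @ q)"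
    using dl_le[OF assms(1,2)] walk_join[of p E q] pq by simp
  then show ?thesis using wl_join[of p q d] pq p q by simp
qed

lemma dl_edge_le: "fin E \<Longrightarrow> \<forall>e\<in>E. 0 \<le> d e \<Longrightarrow> {x,y} \<in> E \<Longrightarrow> dl E d x y \<le> d {x,y}"
  using dl_le[of E d "[x,y]" x y] by simp

lemma dfE_nonneg: "dfE E d \<Longrightarrow> \<forall>e\<in>E. 0 \<le> d e" unfolding dfE_def by blast

lemma dfE_dl_ge: "fin E \<Longrightarrow> dfE E d \<Longrightarrow> {x,y} \<in> E \<Longrightarrow> d {x,y} \<le> dl E d x y"
  using dl_attain[of E d x y] rch_edge[of x y E] dfE_nonneg[of E d]
  unfolding dfE_def pths_def by fastforce

lemma dfE_edge: "fin E \<Longrightarrow> dfE E d \<Longrightarrow> {x,y} \<in> E \<Longrightarrow> dl E d x y = d {x,y}"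
  using dfE_dl_ge dl_edge_le dfE_nonneg by (metis order_antisym)

lemma graph_fin: "graph G \<Longrightarrow> fin (edges G)"
proof -
  assume g: "graph G"
  have "edges G \<subseteq> Pow (verts G)" using g unfolding graph_def by auto
  then have "finite (edges G)" using g unfolding graph_def by (meson finite_Pow_iff finite_subset)
  then show ?thesis using g unfolding graph_def fin_def by blast
qed

lemma is_path_iff: "is_path G xs v w \<longleftrightarrow> xs \<noteq> [] \<and> hd xs = v \<and> last xs = w \<and> distinct xs \<and>
     set xs \<subseteq> verts G \<and> walk (edges G) xs"
  unfolding is_path_def walk_idx by blast

lemma DF_iff: assumes "graph G" shows "distance_function G d \<longleftrightarrow> dfE (edges G) d"
proof
  assume df: "distance_function G d"
  have nn: "\<forall>e\<in>edges G. 0 \<le> d e" using df unfolding distance_function_def by blast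
  show "dfE (edges G) d" unfolding dfE_def
  proof (intro conjI nn allI impI)
    fix v w xs assume a: "{v,w} \<in> edges G" "xs \<noteq> []" "hd xs = v" "last xs = w" "walk (edges G) xs"
    obtain ys where ys: "ys \<noteq> [] \<and> hd ys = hd xs \<and> last ys = last xs \<and> distinct ys \<and> set ys \<subseteq> set xs
     \<and> walk (edges G) ys \<and> wl d ys \<le> wl d xs" using shorten a nn by blast
    have "v \<noteq> w" using fin_ne graph_fin assms a by metis
    then have "set xs \<subseteq> \<Union>(edges G)" using walk_set2 a by metis
    also have "\<dots> \<subseteq> verts G" using assms unfolding graph_def by auto
    finally have "is_path G ys v w" unfolding is_path_iff using ys a by auto
    then have "d {v,w} \<le> wl d ys" using df a unfolding distance_function_def wl_idx[symmetric] by blast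
    then show "d {v,w} \<le> wl d xs" using ys by linarith
  qed
next
  assume "dfE (edges G) d"
  then show "distance_function G d" unfolding distance_function_def dfE_def is_path_iff wl_idx
    by blast
qed



definition realizes :: "nat \<Rightarrow> 'a set set \<Rightarrow> ('a set \<Rightarrow> real) \<Rightarrow> ('a \<Rightarrow> nat \<Rightarrow> real) \<Rightarrow> bool" where
  "realizes k E d \<phi> = (\<forall>v w. {v,w} \<in> E \<longrightarrow> linf_dist k (\<phi> v) (\<phi> w) = d {v,w})"
definition P :: "nat \<Rightarrow> 'a set set \<Rightarrow> bool" where
  "P k E = (\<forall>d. dfE E d \<longrightarrow> (\<exists>\<phi>. realizes k E d \<phi>))"
definition fE :: "'a set set \<Rightarrow> nat" where
  "fE E = (LEAST k. P k E)"

lemma f_inf_eq: "graph G \<Longrightarrow> f_inf G = fE (edges G)"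
  unfolding f_inf_def fE_def P_def realizes_def using DF_iff by metis

lemma linf_ge: "i < k \<Longrightarrow> \<bar>x i - y i\<bar> \<le> linf_dist k x y"
  unfolding linf_dist_def by (intro Max_ge) auto

lemma linf_nonneg: "0 \<le> linf_dist k x y"
  unfolding linf_dist_def by (intro Max_ge) auto

lemma linf_cases: "linf_dist k x y = 0 \<or> (\<exists>i<k. linf_dist k x y = \<bar>x i - y i\<bar>)"
proof -
  have "linf_dist k x y \<in> insert 0 ((\<lambda>i. \<bar>x i - y i\<bar>) ` {..<k})"
    unfolding linf_dist_def by (intro Max_in) auto
  then show ?thesis by auto
qed

lemma linf_eqI:
  assumes "0 \<le> D" "\<forall>i<k. \<bar>x i - y i\<bar> \<le> D" "D = 0 \<or> (\<exists>i<k. \<bar>x i - y i\<bar> = D)"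
  shows "linf_dist k x y = D"
proof (rule order_antisym)
  show "linf_dist k x y \<le> D" unfolding linf_dist_def using assms by (subst Max_le_iff) auto
  show "D \<le> linf_dist k x y" using assms(3) linf_nonneg linf_ge by metis
qed

lemma realizes_coord:
  assumes "realizes k E d \<phi>" "{v,w} \<in> E"
  shows "(\<forall>i<k. \<bar>\<phi> v i - \<phi> w i\<bar> \<le> d {v,w}) \<and> (d {v,w} = 0 \<or> (\<exists>i<k. \<bar>\<phi> v i - \<phi> w i\<bar> = d {v,w}))"
  using assms linf_ge linf_cases unfolding realizes_def by metis

lemma realizesI:
  assumes "\<forall>e\<in>E. 0 \<le> d e"
    and "\<And>v w. {v,w} \<in> E \<Longrightarrow> (\<forall>i<k. \<bar>\<phi> v i - \<phi> w i\<bar> \<le> d {v,w}) \<and> (d {v,w} = 0 \<or> (\<exists>i<k. \<bar>\<phi> v i - \<phi> w i\<bar> = d {v,w}))"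
  shows "realizes k E d \<phi>"
  unfolding realizes_def using assms linf_eqI by metis

lemma P_mono: assumes "P k E" "k \<le> k'" shows "P k' E"
  unfolding P_def
proof (intro allI impI)
  fix d assume d: "dfE E d"
  obtain \<phi> where \<phi>: "realizes k E d \<phi>" using assms d P_def by blast
  show "\<exists>\<phi>. realizes k' E d \<phi>"
  proof (rule exI[of _ "\<lambda>v i. if i < k then \<phi> v i else 0"], rule realizesI)
    show "\<forall>e\<in>E. 0 \<le> d e" using d dfE_nonneg by blast
    fix v w assume e: "{v,w} \<in> E"
    note c = realizes_coord[OF \<phi> e]
    have "0 \<le> d {v,w}" using d dfE_nonneg e by blast
    let ?\<psi> = "\<lambda>v i. if i < k then \<phi> v i else 0"
    have A: "\<forall>i<k'. \<bar>?\<psi> v i - ?\<psi> w i\<bar> \<le> d {v,w}"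
    proof (intro allI impI)
      fix i assume "i < k'"
      show "\<bar>?\<psi> v i - ?\<psi> w i\<bar> \<le> d {v,w}"
        using c \<open>0 \<le> d {v,w}\<close> by (cases "i < k") auto
    qed
    have B: "d {v,w} = 0 \<or> (\<exists>i<k'. \<bar>?\<psi> v i - ?\<psi> w i\<bar> = d {v,w})"
    proof (cases "d {v,w} = 0")
      case False
      then obtain i where "i < k" "\<bar>\<phi> v i - \<phi> w i\<bar> = d {v,w}" using c by blast
      then show ?thesis using assms(2) by (intro disjI2 exI[of _ i]) auto
    qed simp
    show "(\<forall>i<k'. \<bar>?\<psi> v i - ?\<psi> w i\<bar> \<le> d {v, w}) \<and>
         (d {v, w} = 0 \<or> (\<exists>i<k'. \<bar>?\<psi> v i - ?\<psi> w i\<bar> = d {v, w}))"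
      using A B by blast
  qed
qed

lemma rho_lip:
  assumes "fin E" "\<forall>e\<in>E. 0 \<le> d e" "{x,y} \<in> E"
  shows "\<bar>(if rch E x a then dl E d x a else 0) - (if rch E y a then dl E d y a else 0)\<bar> \<le> d {x,y}"
proof -
  have xy: "rch E x y" "rch E y x" using rch_edge assms(3) by (metis insert_commute)+
  have "{y,x} \<in> E" using assms(3) by (simp add: insert_commute)
  show ?thesis
  proof (cases "rch E x a")
    case True
    then have "rch E y a" using rch_trans xy by metis
    moreover have "dl E d x a \<le> dl E d x y + dl E d y a" using dl_tri assms xy True \<open>rch E y a\<close> by metis
    moreover have "dl E d y a \<le> dl E d y x + dl E d x a" using dl_tri assms xy True \<open>rch E y a\<close> by metis
    moreover have "dl E d x y \<le> d {x,y}" "dl E d y x \<le> d {x,y}"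
      using dl_edge_le[OF assms] dl_sym by metis+
    ultimately show ?thesis using True by auto
  next
    case False
    then have "\<not> rch E y a" using rch_trans xy by metis
    then show ?thesis using False assms by auto
  qed
qed

lemma P_exists: assumes "fin E" shows "P (card (\<Union>E)) E"
  unfolding P_def
proof (intro allI impI)
  fix d assume d: "dfE E d"
  note nn = dfE_nonneg[OF d]
  let ?n = "card (\<Union>E)"
  obtain h where h: "bij_betw h {0..<?n} (\<Union>E)" using ex_bij_betw_nat_finite fin_U assms by blast
  let ?\<phi> = "\<lambda>u i. if rch E u (h i) then dl E d u (h i) else 0"
  show "\<exists>\<phi>. realizes ?n E d \<phi>"
  proof (rule exI[of _ ?\<phi>], rule realizesI[OF nn])
    fix v w assume e: "{v,w} \<in> E"
    have A: "\<forall>i<?n. \<bar>?\<phi> v i - ?\<phi> w i\<bar> \<le> d {v,w}" using rho_lip[OF assms nn e] by blast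
    have "w \<in> \<Union>E" using e by blast
    then obtain i where i: "i < ?n" "h i = w" using h unfolding bij_betw_def
      by (metis atLeastLessThan_iff imageE)
    have "rch E v w" using rch_edge e by metis
    then have "?\<phi> v i - ?\<phi> w i = d {v,w}"
      using i dfE_edge[OF assms d e] dl_refl[OF assms nn] rch_refl by simp
    then show "(\<forall>i<?n. \<bar>?\<phi> v i - ?\<phi> w i\<bar> \<le> d {v,w}) \<and> (d {v,w} = 0 \<or> (\<exists>i<?n. \<bar>?\<phi> v i - ?\<phi> w i\<bar> = d {v,w}))"
      using A i nn e by (metis abs_of_nonneg)
  qed
qed

lemma fE_P: "fin E \<Longrightarrow> P (fE E) E"
  unfolding fE_def by (rule LeastI_ex) (use P_exists in blast)

lemma fE_le: "P k E \<Longrightarrow> fE E \<le> k"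
  unfolding fE_def by (rule Least_le)



lemma dfE_walk: "dfE E d \<Longrightarrow> {v,w} \<in> E \<Longrightarrow> xs \<noteq> [] \<Longrightarrow> hd xs = v \<Longrightarrow> last xs = w \<Longrightarrow> walk E xs
   \<Longrightarrow> d {v,w} \<le> wl d xs"
  unfolding dfE_def by blast

lemma dfE_restr: "dfE E' d \<Longrightarrow> E \<subseteq> E' \<Longrightarrow> dfE E d"
  unfolding dfE_def using walk_mono by blast

lemma fin_sub: "fin E' \<Longrightarrow> E \<subseteq> E' \<Longrightarrow> fin E"
  unfolding fin_def by (meson finite_subset subset_iff)

lemma extend_df:
  assumes fE': "fin E'" and sub: "E \<subseteq> E'" and d: "dfE E d"
  shows "\<exists>d'. dfE E' d' \<and> (\<forall>e\<in>E. d' e = d e)"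
proof -
  have fE: "fin E" using fin_sub fE' sub by blast
  note nn = dfE_nonneg[OF d]
  define U where "U = \<Union>E"
  have fU: "finite U" unfolding U_def using fin_U fE by blast
  have finE: "finite E" using fE fin_def by blast
  define M where "M = (\<Sum>e\<in>E. d e) + (\<Sum>x\<in>U. \<Sum>y\<in>U. if rch E x y then dl E d x y else 0)"
  define d' where "d' e = (if e \<in> E then d e else if (\<exists>x y. e={x,y} \<and> rch E x y)
      then (SOME r. \<exists>x y. e = {x,y} \<and> rch E x y \<and> r = dl E d x y) else M)" for e
  have t1: "0 \<le> (\<Sum>e\<in>E. d e)" using nn by (simp add: sum_nonneg)
  have t2: "0 \<le> (if rch E x y then dl E d x y else 0)" for x y using dl_nonneg[OF fE nn] by simp
  have t3: "0 \<le> (\<Sum>x\<in>U. \<Sum>y\<in>U. if rch E x y then dl E d x y else 0)"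
    using t2 by (simp add: sum_nonneg)
  have M0: "0 \<le> M" unfolding M_def using t1 t3 by simp
  have good: "d' {a,b} = dl E d a b" if "{a,b} \<notin> E" "rch E a b" for a b
  proof -
    have ex: "\<exists>r. \<exists>x y. {a,b} = {x,y} \<and> rch E x y \<and> r = dl E d x y" using that by blast
    have "\<exists>x y. {a,b} = {x,y} \<and> rch E x y \<and> d' {a,b} = dl E d x y"
      unfolding d'_def using that someI_ex[OF ex] by auto
    then show ?thesis using dl_sym by (metis doubleton_eq_iff)
  qed
  have dE: "d' e = d e" if "e \<in> E" for e using that unfolding d'_def by simp
  have bad: "d' {a,b} = M" if "{a,b} \<notin> E" "\<not> rch E a b" for a b
  proof -
    have ne: "\<not> (\<exists>x y. {a,b}={x,y} \<and> rch E x y)" using that rch_sym by (metis doubleton_eq_iff)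
    show ?thesis unfolding d'_def by (simp only: if_not_P[OF that(1)] if_not_P[OF ne])
  qed
  have bound: "d' e \<le> M" if "e \<in> E'" for e
  proof -
    have "\<exists>u v. e = {u,v} \<and> u \<noteq> v" using that fE' unfolding fin_def by simp
    then obtain a b where ab: "e = {a,b}" "a \<noteq> b" by auto
    show ?thesis
    proof (cases "e \<in> E")
      case True
      then have "d e \<le> (\<Sum>e\<in>E. d e)" using finE nn by (intro member_le_sum) auto
      then show ?thesis using dE True t3 unfolding M_def by simp
    next
      case False
      show ?thesis
      proof (cases "rch E a b")
        case True
        then obtain xs where xs: "xs \<noteq> []" "hd xs = a" "last xs = b" "walk E xs" unfolding rch_def by blast
        have sx: "set xs \<subseteq> \<Union>E" using walk_set2[OF xs(4,1)] xs(2,3) ab(2) by simp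
        have "a \<in> set xs" "b \<in> set xs" using xs(1,2,3) hd_in_set last_in_set by blast+
        then have "a \<in> U" "b \<in> U" using sx unfolding U_def by blast+
        have "dl E d a b = (if rch E a b then dl E d a b else 0)" using True by simp
        also have "\<dots> \<le> (\<Sum>y\<in>U. if rch E a y then dl E d a y else 0)"
          using \<open>b \<in> U\<close> fU t2 by (intro member_le_sum[where f="\<lambda>y. if rch E a y then dl E d a y else 0"]) auto
        also have "\<dots> \<le> (\<Sum>x\<in>U. \<Sum>y\<in>U. if rch E x y then dl E d x y else 0)"
          using \<open>a \<in> U\<close> fU t2 by (intro member_le_sum[where f="\<lambda>x. \<Sum>y\<in>U. if rch E x y then dl E d x y else 0"])
            (auto intro: sum_nonneg)
        finally show ?thesis using good False True ab t1 unfolding M_def by simp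
      next
        case False
        then show ?thesis using bad \<open>e \<notin> E\<close> ab by simp
      qed
    qed
  qed
  have nn': "\<forall>e\<in>E'. 0 \<le> d' e"
  proof
    fix e assume "e \<in> E'"
    then have "\<exists>u v. e = {u,v} \<and> u \<noteq> v" using fE' unfolding fin_def by simp
    then obtain a b where ab: "e = {a,b}" by auto
    show "0 \<le> d' e"
    proof (cases "e \<in> E")
      case True then show ?thesis using dE nn by simp
    next
      case False
      then show ?thesis
        using good[of a b] bad[of a b] dl_nonneg[OF fE nn, of a b] M0 ab by (cases "rch E a b") auto
    qed
  qed
  have repl: "walk E' xs \<Longrightarrow> xs \<noteq> [] \<Longrightarrow> (\<exists>ys. ys \<noteq> [] \<and> hd ys = hd xs \<and> last ys = last xs \<and> walk E ys
      \<and> wl d ys \<le> wl d' xs) \<or> M \<le> wl d' xs" for xs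
  proof (induction xs rule: induct_list012)
    case (2 x) then show ?case by (intro disjI1 exI[of _ "[x]"]) auto
  next
    case (3 x y zs)
    have exy: "{x,y} \<in> E'" and wt: "walk E' (y#zs)" using 3 by auto
    have d0: "0 \<le> d' {x,y}" using nn' exy by blast
    have w0: "0 \<le> wl d' (y#zs)" using wl_nonneg wt nn' by blast
    have ih: "(\<exists>ys. ys \<noteq> [] \<and> hd ys = hd (y#zs) \<and> last ys = last (y#zs) \<and> walk E ys \<and> wl d ys \<le> wl d' (y#zs)) \<or> M \<le> wl d' (y#zs)"
      using "3.IH"(2) wt by blast
    from ih show ?case
    proof
      assume "\<exists>ys. ys \<noteq> [] \<and> hd ys = hd (y#zs) \<and> last ys = last (y#zs) \<and> walk E ys \<and> wl d ys \<le> wl d' (y#zs)"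
      then obtain ys where ys: "ys \<noteq> []" "hd ys = y" "last ys = last (y#zs)" "walk E ys" "wl d ys \<le> wl d' (y#zs)"
        by auto
      have ys': "ys = y # tl ys" using ys by (cases ys) auto
      show ?case
      proof (cases "{x,y} \<in> E")
        case True
        have "walk E (x#ys)" using True ys ys' by (metis walk.simps(1))
        moreover have "wl d (x#ys) = d {x,y} + wl d ys" using ys' by (metis wl.simps(1))
        moreover have "last (x#ys) = last (x#y#zs)" using ys(1,3) by simp
        moreover have "d {x,y} = d' {x,y}" using dE True by simp
        ultimately show ?thesis using ys
          by (intro disjI1 exI[of _ "x#ys"]) simp
      next
        case False
        show ?thesis
        proof (cases "rch E x y")
          case True
          obtain p where p: "p \<in> pths E x y" "wl d p = dl E d x y" using dl_attain[OF fE nn True] by blast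
          have pp: "p \<noteq> []" "hd p = x" "last p = y" "walk E p" using p(1) unfolding pths_def by auto
          have "walk E (butlast p @ ys)" using walk_join[of p E ys] pp ys by simp
          moreover have "wl d (butlast p @ ys) = wl d p + wl d ys" using wl_join[of p ys d] pp ys by simp
          moreover have "hd (butlast p @ ys) = x" using pp ys hd_join[of p ys] by simp
          moreover have "last (butlast p @ ys) = last ys" using ys by simp
          ultimately show ?thesis using ys good[OF False True] p(2)
            by (intro disjI1 exI[of _ "butlast p @ ys"]) auto
        next
          case False
          then show ?thesis using bad \<open>{x,y} \<notin> E\<close> w0 by simp
        qed
      qed
    next
      assume "M \<le> wl d' (y#zs)" then show ?case using d0 by simp
    qed
  qed simp
  have "dfE E' d'" unfolding dfE_def
  proof (intro conjI nn' allI impI)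
    fix v w xs assume a: "{v,w} \<in> E'" "xs \<noteq> []" "hd xs = v" "last xs = w" "walk E' xs"
    from repl[OF a(5,2)] show "d' {v,w} \<le> wl d' xs"
    proof
      assume "M \<le> wl d' xs" then show ?thesis using bound[OF a(1)] by linarith
    next
      assume "\<exists>ys. ys \<noteq> [] \<and> hd ys = hd xs \<and> last ys = last xs \<and> walk E ys \<and> wl d ys \<le> wl d' xs"
      then obtain ys where ys: "ys \<noteq> []" "hd ys = v" "last ys = w" "walk E ys" "wl d ys \<le> wl d' xs"
        using a by auto
      show ?thesis
      proof (cases "{v,w} \<in> E")
        case True
        then have "d {v,w} \<le> wl d ys" using dfE_walk[OF d True ys(1,2,3,4)] by simp
        then show ?thesis using dE True ys by simp
      next
        case False
        have "rch E v w" unfolding rch_def using ys by blast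
        then show ?thesis using good[OF False] dl_le[OF fE nn ys(4,1,2,3)] ys(5) by simp
      qed
    qed
  qed
  then show ?thesis using dE by blast
qed

lemma P_sub: assumes "fin E'" "E \<subseteq> E'" "P k E'" shows "P k E"
  unfolding P_def
proof (intro allI impI)
  fix d assume "dfE E d"
  then obtain d' where d': "dfE E' d'" "\<forall>e\<in>E. d' e = d e" using extend_df assms by blast
  then obtain \<phi> where "realizes k E' d' \<phi>" using assms(3) P_def by blast
  then have "realizes k E d \<phi>" using d' assms(2) unfolding realizes_def by auto
  then show "\<exists>\<phi>. realizes k E d \<phi>" by blast
qed

lemma fE_sub: "fin E' \<Longrightarrow> E \<subseteq> E' \<Longrightarrow> fE E \<le> fE E'"
  by (rule fE_le, rule P_sub[of E'], auto intro: fE_P)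



lemma mcshane:
  assumes fE: "fin E" and d: "dfE E d" and fC: "finite C"
    and cl: "\<forall>a\<in>C. \<forall>b\<in>C. a \<noteq> b \<longrightarrow> {a,b} \<in> E"
    and lf: "\<forall>a\<in>C. \<forall>b\<in>C. a \<noteq> b \<longrightarrow> \<bar>f a - f b\<bar> \<le> d {a,b}"
  shows "\<exists>g. (\<forall>c\<in>C. g c = f c) \<and> (\<forall>x y. {x,y} \<in> E \<longrightarrow> \<bar>g x - g y\<bar> \<le> d {x,y})"
proof (cases "C = {}")
  case True then show ?thesis using dfE_nonneg[OF d] by (intro exI[of _ "\<lambda>_. 0"]) auto
next
  case False
  note nn = dfE_nonneg[OF d]
  obtain c0 where c0: "c0 \<in> C" using False by blast
  define g where "g x = (if rch E x c0 then Min ((\<lambda>c. f c + dl E d x c) ` C) else 0)" for x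
  have rC: "rch E c c'" if "c \<in> C" "c' \<in> C" for c c'
    using that cl rch_edge rch_refl by metis
  have rx: "rch E x c" if "rch E x c0" "c \<in> C" for x c using rC that c0 rch_trans by metis
  have half: "g x - g y \<le> d {x,y}" if e: "{x,y} \<in> E" for x y
  proof (cases "rch E y c0")
    case True
    have xy: "rch E x y" using rch_edge e by metis
    then have xc: "rch E x c0" using True rch_trans by metis
    have "g y \<in> (\<lambda>c. f c + dl E d y c) ` C" unfolding g_def using True fC False by (simp add: Min_in)
    then obtain c where c: "c \<in> C" "g y = f c + dl E d y c" by auto
    have "g x \<le> f c + dl E d x c" unfolding g_def using xc fC c by simp
    also have "\<dots> \<le> f c + dl E d x y + dl E d y c" using dl_tri[OF fE nn xy rx[OF True c(1)]] by simp
    also have "\<dots> \<le> g y + d {x,y}" using dl_edge_le[OF fE nn e] c by simp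
    finally show ?thesis by simp
  next
    case False
    have "rch E y x" using rch_edge e by (metis insert_commute)
    then have "\<not> rch E x c0" using False rch_trans by metis
    then show ?thesis using False nn e unfolding g_def by simp
  qed
  have lip: "\<forall>x y. {x,y} \<in> E \<longrightarrow> \<bar>g x - g y\<bar> \<le> d {x,y}"
    using half by (metis abs_le_iff insert_commute minus_diff_eq)
  have ext: "g c = f c" if c: "c \<in> C" for c
  proof -
    have r: "rch E c c0" using rC c c0 by blast
    have "g c \<le> f c + dl E d c c" unfolding g_def using r fC c by simp
    then have le: "g c \<le> f c" using dl_refl[OF fE nn] by simp
    have "f c \<le> f c' + dl E d c c'" if c': "c' \<in> C" for c'
    proof (cases "c = c'")
      case True then show ?thesis using dl_refl[OF fE nn] by simp
    next
      case False
      have e: "{c,c'} \<in> E" using cl c c' False by blast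
      have "d {c,c'} \<le> dl E d c c'" using dfE_dl_ge[OF fE d e] .
      moreover have "\<bar>f c - f c'\<bar> \<le> d {c,c'}" using lf c c' False by blast
      ultimately show ?thesis by linarith
    qed
    then have "f c \<le> g c" unfolding g_def using r fC False by (simp add: Min_ge_iff)
    then show ?thesis using le by simp
  qed
  show ?thesis using lip ext by blast
qed

lemma linf_shift: "linf_dist k (\<lambda>i. x i - c i) (\<lambda>i. y i - c i) = linf_dist k x y"
  unfolding linf_dist_def by simp

lemma glue1:
  assumes f1: "fin E1" and f2: "fin E2" and I: "\<Union>E1 \<inter> \<Union>E2 \<subseteq> {v}"
    and P1: "P k1 E1" and P2: "P k2 E2"
  shows "P (max k1 k2) (E1 \<union> E2)"
  unfolding P_def
proof (intro allI impI)
  fix d assume d: "dfE (E1 \<union> E2) d"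
  have P1': "P (max k1 k2) E1" "P (max k1 k2) E2" using P_mono P1 P2 by fastforce+
  obtain \<phi>1 where \<phi>1: "realizes (max k1 k2) E1 d \<phi>1"
    using P1' d dfE_restr P_def by (metis Un_upper1)
  obtain \<phi>2 where \<phi>2: "realizes (max k1 k2) E2 d \<phi>2"
    using P1' d dfE_restr P_def by (metis Un_upper2)
  define \<psi> where "\<psi> u = (if u \<in> \<Union>E1 then (\<lambda>i. \<phi>1 u i - \<phi>1 v i) else (\<lambda>i. \<phi>2 u i - \<phi>2 v i))" for u
  have a1: "\<psi> u = (\<lambda>i. \<phi>1 u i - \<phi>1 v i)" if "u \<in> \<Union>E1" for u using that \<psi>_def by simp
  have a2: "\<psi> u = (\<lambda>i. \<phi>2 u i - \<phi>2 v i)" if "u \<in> \<Union>E2" for u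
    using that I unfolding \<psi>_def by auto
  have "realizes (max k1 k2) (E1 \<union> E2) d \<psi>"
    unfolding realizes_def
  proof (intro allI impI)
    fix a b assume "{a,b} \<in> E1 \<union> E2"
    then show "linf_dist (max k1 k2) (\<psi> a) (\<psi> b) = d {a,b}"
    proof
      assume e: "{a,b} \<in> E1"
      then have "a \<in> \<Union>E1" "b \<in> \<Union>E1" by blast+
      then show ?thesis using a1 linf_shift \<phi>1 e unfolding realizes_def by metis
    next
      assume e: "{a,b} \<in> E2"
      then have "a \<in> \<Union>E2" "b \<in> \<Union>E2" by blast+
      then show ?thesis using a2 linf_shift \<phi>2 e unfolding realizes_def by metis
    qed
  qed
  then show "\<exists>\<phi>. realizes (max k1 k2) (E1 \<union> E2) d \<phi>" by blast
qed



lemma glue3: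
  assumes f1: "fin E1" and f2: "fin E2" and I: "\<Union>E1 \<inter> \<Union>E2 \<subseteq> C" and fC: "finite C"
    and cl1: "\<forall>a\<in>C. \<forall>b\<in>C. a \<noteq> b \<longrightarrow> {a,b} \<in> E1"
    and cl2: "\<forall>a\<in>C. \<forall>b\<in>C. a \<noteq> b \<longrightarrow> {a,b} \<in> E2"
    and P1: "P k1 E1" and P2: "P k2 E2"
  shows "P (k1 + k2) (E1 \<union> E2)"
  unfolding P_def
proof (intro allI impI)
  fix d assume d: "dfE (E1 \<union> E2) d"
  have d1: "dfE E1 d" and d2: "dfE E2 d" using d dfE_restr by blast+
  note nn = dfE_nonneg[OF d]
  obtain \<phi>1 where \<phi>1: "realizes k1 E1 d \<phi>1" using P1 d1 P_def by blast
  obtain \<phi>2 where \<phi>2: "realizes k2 E2 d \<phi>2" using P2 d2 P_def by blast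
  have "\<forall>j. \<exists>g. j < k1 \<longrightarrow> (\<forall>c\<in>C. g c = \<phi>1 c j) \<and> (\<forall>x y. {x,y} \<in> E2 \<longrightarrow> \<bar>g x - g y\<bar> \<le> d {x,y})"
  proof (intro allI impI)
    fix j
    show "\<exists>g. j < k1 \<longrightarrow> (\<forall>c\<in>C. g c = \<phi>1 c j) \<and> (\<forall>x y. {x,y} \<in> E2 \<longrightarrow> \<bar>g x - g y\<bar> \<le> d {x,y})"
    proof (cases "j < k1")
      case True
      have "\<forall>a\<in>C. \<forall>b\<in>C. a \<noteq> b \<longrightarrow> \<bar>\<phi>1 a j - \<phi>1 b j\<bar> \<le> d {a,b}"
        using realizes_coord[OF \<phi>1] cl1 True by blast
      then show ?thesis using mcshane[OF f2 d2 fC cl2, of "\<lambda>c. \<phi>1 c j"] by blast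
    qed simp
  qed
  then obtain g1 where g1: "\<And>j. j < k1 \<Longrightarrow> (\<forall>c\<in>C. g1 j c = \<phi>1 c j) \<and> (\<forall>x y. {x,y} \<in> E2 \<longrightarrow> \<bar>g1 j x - g1 j y\<bar> \<le> d {x,y})"
    by metis
  have "\<forall>j. \<exists>g. j < k2 \<longrightarrow> (\<forall>c\<in>C. g c = \<phi>2 c j) \<and> (\<forall>x y. {x,y} \<in> E1 \<longrightarrow> \<bar>g x - g y\<bar> \<le> d {x,y})"
  proof (intro allI impI)
    fix j
    show "\<exists>g. j < k2 \<longrightarrow> (\<forall>c\<in>C. g c = \<phi>2 c j) \<and> (\<forall>x y. {x,y} \<in> E1 \<longrightarrow> \<bar>g x - g y\<bar> \<le> d {x,y})"
    proof (cases "j < k2")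
      case True
      have "\<forall>a\<in>C. \<forall>b\<in>C. a \<noteq> b \<longrightarrow> \<bar>\<phi>2 a j - \<phi>2 b j\<bar> \<le> d {a,b}"
        using realizes_coord[OF \<phi>2] cl2 True by blast
      then show ?thesis using mcshane[OF f1 d1 fC cl1, of "\<lambda>c. \<phi>2 c j"] by blast
    qed simp
  qed
  then obtain g2 where g2: "\<And>j. j < k2 \<Longrightarrow> (\<forall>c\<in>C. g2 j c = \<phi>2 c j) \<and> (\<forall>x y. {x,y} \<in> E1 \<longrightarrow> \<bar>g2 j x - g2 j y\<bar> \<le> d {x,y})"
    by metis
  define \<psi> where "\<psi> x i = (if i < k1 then (if x \<in> \<Union>E1 then \<phi>1 x i else g1 i x)
      else (if x \<in> \<Union>E2 then \<phi>2 x (i - k1) else g2 (i - k1) x))" for x i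
  have A1: "\<psi> x i = (if i < k1 then \<phi>1 x i else g2 (i - k1) x)" if "x \<in> \<Union>E1" "i < k1 + k2" for x i
    using that I g2[of "i - k1"] unfolding \<psi>_def by auto
  have A2: "\<psi> x i = (if i < k1 then g1 i x else \<phi>2 x (i - k1))" if "x \<in> \<Union>E2" "i < k1 + k2" for x i
    using that I g1[of i] unfolding \<psi>_def by auto
  have "realizes (k1 + k2) (E1 \<union> E2) d \<psi>"
  proof (rule realizesI[OF nn])
    fix a b assume "{a,b} \<in> E1 \<union> E2"
    then show "(\<forall>i<k1 + k2. \<bar>\<psi> a i - \<psi> b i\<bar> \<le> d {a,b}) \<and> (d {a,b} = 0 \<or> (\<exists>i<k1 + k2. \<bar>\<psi> a i - \<psi> b i\<bar> = d {a,b}))"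
    proof
      assume e: "{a,b} \<in> E1"
      then have ab: "a \<in> \<Union>E1" "b \<in> \<Union>E1" by blast+
      note c = realizes_coord[OF \<phi>1 e]
      have "\<forall>i<k1 + k2. \<bar>\<psi> a i - \<psi> b i\<bar> \<le> d {a,b}"
      proof (intro allI impI)
        fix i assume i: "i < k1 + k2"
        show "\<bar>\<psi> a i - \<psi> b i\<bar> \<le> d {a,b}"
        proof (cases "i < k1")
          case True then show ?thesis using A1[OF ab(1) i] A1[OF ab(2) i] c by simp
        next
          case False then show ?thesis using A1[OF ab(1) i] A1[OF ab(2) i] g2[of "i - k1"] e i by simp
        qed
      qed
      moreover have "d {a,b} = 0 \<or> (\<exists>i<k1 + k2. \<bar>\<psi> a i - \<psi> b i\<bar> = d {a,b})"
        using c A1 ab by (metis add.commute trans_less_add2)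
      ultimately show ?thesis by blast
    next
      assume e: "{a,b} \<in> E2"
      then have ab: "a \<in> \<Union>E2" "b \<in> \<Union>E2" by blast+
      note c = realizes_coord[OF \<phi>2 e]
      have "\<forall>i<k1 + k2. \<bar>\<psi> a i - \<psi> b i\<bar> \<le> d {a,b}"
      proof (intro allI impI)
        fix i assume i: "i < k1 + k2"
        show "\<bar>\<psi> a i - \<psi> b i\<bar> \<le> d {a,b}"
        proof (cases "i < k1")
          case True then show ?thesis using A2[OF ab(1) i] A2[OF ab(2) i] g1[of i] e by simp
        next
          case False then show ?thesis using A2[OF ab(1) i] A2[OF ab(2) i] c i by simp
        qed
      qed
      moreover have "d {a,b} = 0 \<or> (\<exists>i<k1 + k2. \<bar>\<psi> a i - \<psi> b i\<bar> = d {a,b})"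
      proof (cases "d {a,b} = 0")
        case False
        then obtain j where j: "j < k2" "\<bar>\<phi>2 a j - \<phi>2 b j\<bar> = d {a,b}" using c by blast
        have "k1 + j < k1 + k2" using j by simp
        then show ?thesis using A2[OF ab(1)] A2[OF ab(2)] j by (intro disjI2 exI[of _ "k1 + j"]) simp
      qed simp
      ultimately show ?thesis by blast
    qed
  qed
  then show "\<exists>\<phi>. realizes (k1 + k2) (E1 \<union> E2) d \<phi>" by blast
qed



lemma norm0:
  assumes \<phi>: "realizes k E d \<phi>" and e: "{v,w} \<in> E" and k: "0 < k" and nn: "\<forall>e\<in>E. 0 \<le> d e"
  shows "\<exists>\<phi>'. realizes k E d \<phi>' \<and> \<phi>' v 0 = 0 \<and> \<phi>' w 0 = d {v,w}"
proof -
  note c = realizes_coord[OF \<phi> e]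
  obtain j where j: "j < k" "\<bar>\<phi> v j - \<phi> w j\<bar> = d {v,w}"
  proof (cases "d {v,w} = 0")
    case True
    then have "\<bar>\<phi> v 0 - \<phi> w 0\<bar> = d {v,w}" using c k by (metis abs_ge_zero order_antisym)
    then show ?thesis using that k by blast
  next
    case False then show ?thesis using c that by blast
  qed
  define \<sigma> where "\<sigma> i = (if i = 0 then j else if i = j then 0 else i)" for i
  define s :: real where "s = (if \<phi> v j \<le> \<phi> w j then 1 else -1)"
  define \<phi>' where "\<phi>' x i = (if i = 0 then s * (\<phi> x j - \<phi> v j) else \<phi> x (\<sigma> i))" for x i
  have co: "\<bar>\<phi>' x i - \<phi>' y i\<bar> = \<bar>\<phi> x (\<sigma> i) - \<phi> y (\<sigma> i)\<bar>" for x y i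
  proof (cases "i = 0")
    case True
    have "\<bar>s * (\<phi> x j - \<phi> v j) - s * (\<phi> y j - \<phi> v j)\<bar> = \<bar>\<phi> x j - \<phi> y j\<bar>"
      unfolding s_def by (auto simp: abs_if algebra_simps)
    then show ?thesis using True unfolding \<phi>'_def \<sigma>_def by simp
  qed (simp add: \<phi>'_def)
  have sk: "\<sigma> i < k" if "i < k" for i using that j k unfolding \<sigma>_def by auto
  have inv: "\<sigma> (\<sigma> i) = i" for i unfolding \<sigma>_def by auto
  have "realizes k E d \<phi>'"
  proof (rule realizesI[OF nn])
    fix a b assume e: "{a,b} \<in> E"
    note c = realizes_coord[OF \<phi> e]
    show "(\<forall>i<k. \<bar>\<phi>' a i - \<phi>' b i\<bar> \<le> d {a,b}) \<and> (d {a,b} = 0 \<or> (\<exists>i<k. \<bar>\<phi>' a i - \<phi>' b i\<bar> = d {a,b}))"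
      using c co sk inv by metis
  qed
  moreover have "\<phi>' v 0 = 0" unfolding \<phi>'_def by simp
  moreover have "\<phi>' w 0 = d {v,w}" unfolding \<phi>'_def s_def using j by (cases "\<phi> v j < \<phi> w j") (auto simp: abs_if)
  ultimately show ?thesis by blast
qed

lemma glue2:
  assumes f1: "fin E1" and f2: "fin E2" and I: "\<Union>E1 \<inter> \<Union>E2 \<subseteq> {v,w}"
    and e1: "{v,w} \<in> E1" and e2: "{v,w} \<in> E2"
    and P1: "P k1 E1" and P2: "P k2 E2" and k1: "0 < k1" and k2: "0 < k2"
  shows "P (k1 + k2 - 1) (E1 \<union> E2)"
  unfolding P_def
proof (intro allI impI)
  fix d assume d: "dfE (E1 \<union> E2) d"
  have d1: "dfE E1 d" and d2: "dfE E2 d" using d dfE_restr by blast+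
  note nn = dfE_nonneg[OF d]
  let ?C = "{v,w}"
  have fC: "finite ?C" by simp
  have cl1: "\<forall>a\<in>?C. \<forall>b\<in>?C. a \<noteq> b \<longrightarrow> {a,b} \<in> E1" using e1 by (auto simp: insert_commute)
  have cl2: "\<forall>a\<in>?C. \<forall>b\<in>?C. a \<noteq> b \<longrightarrow> {a,b} \<in> E2" using e2 by (auto simp: insert_commute)
  obtain \<phi>1' where "realizes k1 E1 d \<phi>1'" using P1 d1 P_def by blast
  then obtain \<phi>1 where \<phi>1: "realizes k1 E1 d \<phi>1" "\<phi>1 v 0 = 0" "\<phi>1 w 0 = d {v,w}"
    using norm0 e1 k1 dfE_nonneg[OF d1] by metis
  obtain \<phi>2' where "realizes k2 E2 d \<phi>2'" using P2 d2 P_def by blast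
  then obtain \<phi>2 where \<phi>2: "realizes k2 E2 d \<phi>2" "\<phi>2 v 0 = 0" "\<phi>2 w 0 = d {v,w}"
    using norm0 e2 k2 dfE_nonneg[OF d2] by metis
  have "\<forall>j. \<exists>g. j < k1 \<longrightarrow> (\<forall>c\<in>?C. g c = \<phi>1 c j) \<and> (\<forall>x y. {x,y} \<in> E2 \<longrightarrow> \<bar>g x - g y\<bar> \<le> d {x,y})"
  proof (intro allI impI)
    fix j
    show "\<exists>g. j < k1 \<longrightarrow> (\<forall>c\<in>?C. g c = \<phi>1 c j) \<and> (\<forall>x y. {x,y} \<in> E2 \<longrightarrow> \<bar>g x - g y\<bar> \<le> d {x,y})"
    proof (cases "j < k1")
      case True
      have "\<forall>a\<in>?C. \<forall>b\<in>?C. a \<noteq> b \<longrightarrow> \<bar>\<phi>1 a j - \<phi>1 b j\<bar> \<le> d {a,b}"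
        using realizes_coord[OF \<phi>1(1)] cl1 True by blast
      then show ?thesis using mcshane[OF f2 d2 fC cl2, of "\<lambda>c. \<phi>1 c j"] by blast
    qed simp
  qed
  then obtain g1 where g1: "\<And>j. j < k1 \<Longrightarrow> (\<forall>c\<in>?C. g1 j c = \<phi>1 c j) \<and> (\<forall>x y. {x,y} \<in> E2 \<longrightarrow> \<bar>g1 j x - g1 j y\<bar> \<le> d {x,y})"
    by metis
  have "\<forall>j. \<exists>g. j < k2 \<longrightarrow> (\<forall>c\<in>?C. g c = \<phi>2 c j) \<and> (\<forall>x y. {x,y} \<in> E1 \<longrightarrow> \<bar>g x - g y\<bar> \<le> d {x,y})"
  proof (intro allI impI)
    fix j
    show "\<exists>g. j < k2 \<longrightarrow> (\<forall>c\<in>?C. g c = \<phi>2 c j) \<and> (\<forall>x y. {x,y} \<in> E1 \<longrightarrow> \<bar>g x - g y\<bar> \<le> d {x,y})"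
    proof (cases "j < k2")
      case True
      have "\<forall>a\<in>?C. \<forall>b\<in>?C. a \<noteq> b \<longrightarrow> \<bar>\<phi>2 a j - \<phi>2 b j\<bar> \<le> d {a,b}"
        using realizes_coord[OF \<phi>2(1)] cl2 True by blast
      then show ?thesis using mcshane[OF f1 d1 fC cl1, of "\<lambda>c. \<phi>2 c j"] by blast
    qed simp
  qed
  then obtain g2 where g2: "\<And>j. j < k2 \<Longrightarrow> (\<forall>c\<in>?C. g2 j c = \<phi>2 c j) \<and> (\<forall>x y. {x,y} \<in> E1 \<longrightarrow> \<bar>g2 j x - g2 j y\<bar> \<le> d {x,y})"
    by metis
  let ?K = "k1 + k2 - 1"
  define \<psi> where "\<psi> x i = (if i = 0 then (if x \<in> \<Union>E1 then \<phi>1 x 0 else \<phi>2 x 0)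
      else if i < k1 then (if x \<in> \<Union>E1 then \<phi>1 x i else g1 i x)
      else (if x \<in> \<Union>E2 then \<phi>2 x (i + 1 - k1) else g2 (i + 1 - k1) x))" for x i
  have A1: "\<psi> x i = (if i < k1 then \<phi>1 x i else g2 (i + 1 - k1) x)" if "x \<in> \<Union>E1" "i < ?K" for x i
    using that I g2[of "i + 1 - k1"] k1 unfolding \<psi>_def by auto
  have A2: "\<psi> x i = (if i = 0 then \<phi>2 x 0 else if i < k1 then g1 i x else \<phi>2 x (i + 1 - k1))"
    if "x \<in> \<Union>E2" "i < ?K" for x i
  proof -
    have "\<phi>1 x 0 = \<phi>2 x 0" if "x \<in> \<Union>E1" using that \<open>x \<in> \<Union>E2\<close> I \<phi>1 \<phi>2 by auto
    then show ?thesis using that I g1[of i] unfolding \<psi>_def by auto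
  qed
  have "realizes ?K (E1 \<union> E2) d \<psi>"
  proof (rule realizesI[OF nn])
    fix a b assume "{a,b} \<in> E1 \<union> E2"
    then show "(\<forall>i<?K. \<bar>\<psi> a i - \<psi> b i\<bar> \<le> d {a,b}) \<and> (d {a,b} = 0 \<or> (\<exists>i<?K. \<bar>\<psi> a i - \<psi> b i\<bar> = d {a,b}))"
    proof
      assume e: "{a,b} \<in> E1"
      then have ab: "a \<in> \<Union>E1" "b \<in> \<Union>E1" by blast+
      note c = realizes_coord[OF \<phi>1(1) e]
      have "\<forall>i<?K. \<bar>\<psi> a i - \<psi> b i\<bar> \<le> d {a,b}"
      proof (intro allI impI)
        fix i assume i: "i < ?K"
        show "\<bar>\<psi> a i - \<psi> b i\<bar> \<le> d {a,b}"
        proof (cases "i < k1")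
          case True then show ?thesis using A1[OF ab(1) i] A1[OF ab(2) i] c by simp
        next
          case False then show ?thesis using A1[OF ab(1) i] A1[OF ab(2) i] g2[of "i + 1 - k1"] e i by simp
        qed
      qed
      moreover have "d {a,b} = 0 \<or> (\<exists>i<?K. \<bar>\<psi> a i - \<psi> b i\<bar> = d {a,b})"
      proof (cases "d {a,b} = 0")
        case False
        then obtain j where j: "j < k1" "\<bar>\<phi>1 a j - \<phi>1 b j\<bar> = d {a,b}" using c by blast
        have "j < ?K" using j k2 by simp
        then show ?thesis using A1[OF ab(1)] A1[OF ab(2)] j by (intro disjI2 exI[of _ j]) simp
      qed simp
      ultimately show ?thesis by blast
    next
      assume e: "{a,b} \<in> E2"
      then have ab: "a \<in> \<Union>E2" "b \<in> \<Union>E2" by blast+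
      note c = realizes_coord[OF \<phi>2(1) e]
      have "\<forall>i<?K. \<bar>\<psi> a i - \<psi> b i\<bar> \<le> d {a,b}"
      proof (intro allI impI)
        fix i assume i: "i < ?K"
        show "\<bar>\<psi> a i - \<psi> b i\<bar> \<le> d {a,b}"
        proof (cases "i = 0")
          case True then show ?thesis using A2[OF ab(1) i] A2[OF ab(2) i] c k2 by simp
        next
          case nz: False
          show ?thesis
          proof (cases "i < k1")
            case True then show ?thesis using A2[OF ab(1) i] A2[OF ab(2) i] g1[of i] e nz by simp
          next
            case False
            have "i + 1 - k1 < k2" using i False k1 by simp
            then show ?thesis using A2[OF ab(1) i] A2[OF ab(2) i] c nz False by simp
          qed
        qed
      qed
      moreover have "d {a,b} = 0 \<or> (\<exists>i<?K. \<bar>\<psi> a i - \<psi> b i\<bar> = d {a,b})"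
      proof (cases "d {a,b} = 0")
        case False
        then obtain j where j: "j < k2" "\<bar>\<phi>2 a j - \<phi>2 b j\<bar> = d {a,b}" using c by blast
        show ?thesis
        proof (cases "j = 0")
          case True
          have "0 < ?K" using k1 k2 by simp
          then show ?thesis using A2[OF ab(1)] A2[OF ab(2)] j True by (intro disjI2 exI[of _ 0]) simp
        next
          case False
          let ?i = "j + k1 - 1"
          have i: "?i < ?K" "?i \<noteq> 0" "\<not> ?i < k1" "?i + 1 - k1 = j" using j False k1 by auto
          then show ?thesis using A2[OF ab(1) i(1)] A2[OF ab(2) i(1)] j by (intro disjI2 exI[of _ ?i]) simp
        qed
      qed simp
      ultimately show ?thesis by blast
    qed
  qed
  then show "\<exists>\<phi>. realizes ?K (E1 \<union> E2) d \<phi>" by blast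
qed



lemma wl_one: "walk E xs \<Longrightarrow> xs \<noteq> [] \<Longrightarrow> hd xs \<noteq> last xs \<Longrightarrow> 1 \<le> wl (\<lambda>_. 1) xs"
proof (induction xs rule: induct_list012)
  case (3 x y zs)
  have "0 \<le> wl (\<lambda>_. 1) (y#zs)" using wl_nonneg[of E "y#zs" "\<lambda>_. 1"] 3 by simp
  then show ?case by simp
qed auto

lemma fE_pos: assumes "fin E" "{v,w} \<in> E" shows "0 < fE E"
proof (rule ccontr)
  assume "\<not> 0 < fE E"
  then have "P 0 E" using fE_P[OF assms(1)] by simp
  have "dfE E (\<lambda>_. 1)" unfolding dfE_def
  proof (intro conjI allI impI)
    fix a b xs assume a: "{a,b} \<in> E" "xs \<noteq> []" "hd xs = a" "last xs = b" "walk E xs"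
    have "a \<noteq> b" by (rule fin_ne[OF assms(1) a(1)])
    then show "1 \<le> wl (\<lambda>_. 1) xs" using wl_one[OF a(5) a(2)] a(3,4) by simp
  qed simp
  then obtain \<phi> where "realizes 0 E (\<lambda>_. 1) \<phi>" using \<open>P 0 E\<close> unfolding P_def by blast
  then have "linf_dist 0 (\<phi> v) (\<phi> w) = 1" using assms(2) unfolding realizes_def by blast
  moreover have "linf_dist 0 (\<phi> v) (\<phi> w) = 0" unfolding linf_dist_def by simp
  ultimately show False by simp
qed

lemma graph_sub:
  assumes g: "graph G" and g': "graph G'" and E: "E \<subseteq> edges G \<union> edges G'"
  shows "graph (verts G \<union> verts G', E)"
proof -
  have fin: "finite (verts G \<union> verts G')" using g g' unfolding graph_def by simp
  have "\<exists>u v. e = {u, v} \<and> u \<noteq> v \<and> u \<in> verts G \<union> verts G' \<and> v \<in> verts G \<union> verts G'"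
    if e: "e \<in> E" for e
  proof (cases "e \<in> edges G")
    case True
    then obtain u v where "e = {u, v}" "u \<noteq> v" "u \<in> verts G" "v \<in> verts G"
      using g unfolding graph_def by blast
    then show ?thesis by blast
  next
    case False
    then have "e \<in> edges G'" using e E by blast
    then obtain u v where "e = {u, v}" "u \<noteq> v" "u \<in> verts G'" "v \<in> verts G'"
      using g' unfolding graph_def by blast
    then show ?thesis by blast
  qed
  then show ?thesis using fin unfolding graph_def verts_def edges_def by simp
qed

lemma edges_union: "edges (graph_union G1 G2) = edges G1 \<union> edges G2"
  unfolding graph_union_def edges_def by simp

lemma graph_union_eq: "graph_union G1 G2 = (verts G1 \<union> verts G2, edges G1 \<union> edges G2)"
  unfolding graph_union_def by simp

lemma UE_sub: "graph G \<Longrightarrow> \<Union>(edges G) \<subseteq> verts G"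
  unfolding graph_def by auto

theorem mainTheorem10:
  shows "(\<forall>(G1 :: 'a graph) G2 v. graph G1 \<and> graph G2 \<and> verts G1 \<inter> verts G2 = {v} \<longrightarrow>
            f_inf (graph_union G1 G2) = max (f_inf G1) (f_inf G2))
       \<and> (\<forall>(G1 :: 'a graph) G2 v w. graph G1 \<and> graph G2 \<and> v \<noteq> w \<and>
            verts G1 \<inter> verts G2 = {v, w} \<and> {v, w} \<in> edges G1 \<and> {v, w} \<in> edges G2 \<longrightarrow>
            f_inf (delete_edge (graph_union G1 G2) {v, w}) \<le> f_inf (graph_union G1 G2) \<and>
            int (f_inf (graph_union G1 G2)) \<le> int (f_inf G1) + int (f_inf G2) - 1)
       \<and> (\<forall>(G :: 'a graph) G1 G2 k. graph G1 \<and> graph G2 \<and> is_k_sum k G G1 G2 \<longrightarrow>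
            f_inf G \<le> f_inf G1 + f_inf G2)"
proof (intro conjI allI impI; (elim conjE)?)
  fix G1 G2 :: "'a graph" and v
  assume g1: "graph G1" and g2: "graph G2" and I: "verts G1 \<inter> verts G2 = {v}"
  have gu: "graph (graph_union G1 G2)" unfolding graph_union_eq by (rule graph_sub[OF g1 g2]) simp
  have f1: "fin (edges G1)" and f2: "fin (edges G2)" using graph_fin g1 g2 by blast+
  have fu: "fin (edges G1 \<union> edges G2)" using f1 f2 unfolding fin_def by auto
  have I': "\<Union>(edges G1) \<inter> \<Union>(edges G2) \<subseteq> {v}" using UE_sub[OF g1] UE_sub[OF g2] I by blast
  have A: "fE (edges G1 \<union> edges G2) \<le> max (fE (edges G1)) (fE (edges G2))"
    by (rule fE_le, rule glue1[OF f1 f2 I' fE_P[OF f1] fE_P[OF f2]])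
  have B: "fE (edges G1) \<le> fE (edges G1 \<union> edges G2)" by (rule fE_sub[OF fu]) simp
  have C: "fE (edges G2) \<le> fE (edges G1 \<union> edges G2)" by (rule fE_sub[OF fu]) simp
  have eq: "f_inf (graph_union G1 G2) = fE (edges G1 \<union> edges G2)"
    using f_inf_eq[OF gu] edges_union[of G1 G2] by simp
  show "f_inf (graph_union G1 G2) = max (f_inf G1) (f_inf G2)"
    unfolding eq f_inf_eq[OF g1] f_inf_eq[OF g2] using A max.boundedI[OF B C] by (rule antisym)
next
  fix G1 G2 :: "'a graph" and v w
  assume g1: "graph G1" and g2: "graph G2" and vw: "v \<noteq> w" and I: "verts G1 \<inter> verts G2 = {v, w}"
    and e1: "{v, w} \<in> edges G1" and e2: "{v, w} \<in> edges G2"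
  have gu: "graph (graph_union G1 G2)" unfolding graph_union_eq by (rule graph_sub[OF g1 g2]) simp
  have f1: "fin (edges G1)" and f2: "fin (edges G2)" using graph_fin g1 g2 by blast+
  have fu: "fin (edges G1 \<union> edges G2)" using f1 f2 unfolding fin_def by auto
  have I': "\<Union>(edges G1) \<inter> \<Union>(edges G2) \<subseteq> {v,w}" using UE_sub[OF g1] UE_sub[OF g2] I by blast
  have de: "delete_edge (graph_union G1 G2) {v, w} = (verts G1 \<union> verts G2, edges G1 \<union> edges G2 - {{v,w}})"
    unfolding delete_edge_def graph_union_eq by (simp add: verts_def edges_def)
  have gd: "graph (delete_edge (graph_union G1 G2) {v, w})"
    unfolding de by (rule graph_sub[OF g1 g2]) auto
  have ed: "edges (delete_edge (graph_union G1 G2) {v, w}) \<subseteq> edges G1 \<union> edges G2"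
    unfolding de by (auto simp: edges_def)
  have eq: "f_inf (graph_union G1 G2) = fE (edges G1 \<union> edges G2)"
    using f_inf_eq[OF gu] edges_union[of G1 G2] by simp
  show "f_inf (delete_edge (graph_union G1 G2) {v, w}) \<le> f_inf (graph_union G1 G2)"
    unfolding f_inf_eq[OF gd] eq by (rule fE_sub[OF fu ed])
  have p1: "0 < fE (edges G1)" using fE_pos[OF f1 e1] .
  have p2: "0 < fE (edges G2)" using fE_pos[OF f2 e2] .
  have "fE (edges G1 \<union> edges G2) \<le> fE (edges G1) + fE (edges G2) - 1"
    by (rule fE_le, rule glue2[OF f1 f2 I' e1 e2 fE_P[OF f1] fE_P[OF f2] p1 p2])
  then have "fE (edges G1 \<union> edges G2) + 1 \<le> fE (edges G1) + fE (edges G2)" using p1 p2 by simp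
  then have "int (fE (edges G1 \<union> edges G2) + 1) \<le> int (fE (edges G1) + fE (edges G2))"
    by (simp only: of_nat_le_iff)
  then have "int (fE (edges G1 \<union> edges G2)) + 1 \<le> int (fE (edges G1)) + int (fE (edges G2))" by simp
  then show "int (f_inf (graph_union G1 G2)) \<le> int (f_inf G1) + int (f_inf G2) - 1"
    unfolding eq f_inf_eq[OF g1] f_inf_eq[OF g2] by simp
next
  fix G G1 G2 :: "'a graph" and k
  assume g1: "graph G1" and g2: "graph G2" and ks: "is_k_sum k G G1 G2"
  define C where "C = verts G1 \<inter> verts G2"
  obtain F where G: "G = (verts G1 \<union> verts G2, (edges G1 \<union> edges G2) - F)"
    and cl1: "is_clique G1 C" and cl2: "is_clique G2 C"
    using ks unfolding is_k_sum_def Let_def C_def by blast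
  have gG: "graph G" unfolding G by (rule graph_sub[OF g1 g2]) auto
  have eG: "edges G \<subseteq> edges G1 \<union> edges G2" unfolding G by (auto simp: edges_def)
  have f1: "fin (edges G1)" and f2: "fin (edges G2)" using graph_fin g1 g2 by blast+
  have fu: "fin (edges G1 \<union> edges G2)" using f1 f2 unfolding fin_def by auto
  have I': "\<Union>(edges G1) \<inter> \<Union>(edges G2) \<subseteq> C" using UE_sub[OF g1] UE_sub[OF g2] C_def by blast
  have fC: "finite C" using g1 C_def unfolding graph_def by blast
  have c1: "\<forall>a\<in>C. \<forall>b\<in>C. a \<noteq> b \<longrightarrow> {a,b} \<in> edges G1" using cl1 unfolding is_clique_def by blast
  have c2: "\<forall>a\<in>C. \<forall>b\<in>C. a \<noteq> b \<longrightarrow> {a,b} \<in> edges G2" using cl2 unfolding is_clique_def by blast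
  have "fE (edges G1 \<union> edges G2) \<le> fE (edges G1) + fE (edges G2)"
    by (rule fE_le, rule glue3[OF f1 f2 I' fC c1 c2 fE_P[OF f1] fE_P[OF f2]])
  moreover have "fE (edges G) \<le> fE (edges G1 \<union> edges G2)" by (rule fE_sub[OF fu eG])
  ultimately show "f_inf G \<le> f_inf G1 + f_inf G2"
    unfolding f_inf_eq[OF gG] f_inf_eq[OF g1] f_inf_eq[OF g2] by linarith
qed

end
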